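(* In the continuous MRA model, for any $L\ge1$ and any $\theta,\theta_*\in\mathbb{R}^d$, \[s_1(\theta)=\tfrac12\big(\theta^{(0)}-\theta_*^{(0)}\big)^2,\qquad s_2(\theta)=\tfrac14\big((\theta^{(0)})^2-(\theta_*^{(0)})^2\big)^2+\tfrac18\sum_{l=1}^L\big(r_l(\theta)^2-r_l(\theta_* )^2\big)^2,\] \[s_3(\theta)=\tfrac1{48}\big((u^{(0)}(\theta))^3-(u^{(0)}(\theta_* ))^3\big)^2+\tfrac1{16}\sum_{\substack{l,l',l''=0\\ l=l'+l''}}^L\Big|u^{(l)}(\theta)\overline{u^{(l')}(\theta)u^{(l'')}(\theta)}-u^{(l)}(\theta_* )\overline{u^{(l')}(\theta_* )u^{(l'')}(\theta_* )}\Big|^2\] \[=\tfrac1{12}\big((\theta^{(0)})^3-(\theta_*^{(0)})^3\big)^2+\tfrac18\sum_{l=1}^L\big(\theta^{(0)}r_l(\theta)^2-\theta_*^{(0)}r_l(\theta_* )^2\big)^2+\tfrac1{16}\sum_{\substack{l,l',l''=1\\ l=l'+l''}}^L\Big(r_{l,l',l''}(\theta)^2+r_{l,l',l''}(\theta_* )^2-2r_{l,l',l''}(\theta)r_{l,l',l''}(\theta_* )\cos\big(\lambda_{l,l',l''}(\theta_* )-\lambda_{l,l',l''}(\theta)\big)\Big).\]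
   Context: Continuous MRA model: $\theta=(\theta^{(0)},\theta_1^{(1)},\theta_2^{(1)},\dots,\theta_1^{(L)},\theta_2^{(L)})\in\mathbb{R}^d$, $d=2L+1$; $\mathsf{G}\subset\mathsf{O}(d)$ is the group of $g=\operatorname{diag}(1,R_1(\mathfrak g),\dots,R_L(\mathfrak g))$, $\mathfrak g\in[0,1)$, $R_l(\mathfrak g)=\begin{pmatrix}\cos2\pi l\mathfrak g&\sin2\pi l\mathfrak g\\-\sin2\pi l\mathfrak g&\cos2\pi l\mathfrak g\end{pmatrix}$, with Haar probability measure $\Lambda$. $T_k(\theta)=\int(g\theta)^{\otimes k}d\Lambda(g)$ and $s_k(\theta)=\frac1{2(k!)}\|T_k(\theta)-T_k(\theta_* )\|_{\mathrm{HS}}^2$ (Euclidean norm of tensor entries). Complex coefficients: $u^{(0)}(\theta)=\theta^{(0)}$ and $u^{(l)}(\theta)=\theta_1^{(l)}+i\theta_2^{(l)}=r_l(\theta)e^{i\lambda_l(\theta)}$ for $l\ge1$ (magnitude $r_l$, phase $\lambda_l$). $r_{l,l',l''}=r_lr_{l'}r_{l''}$ and $\lambda_{l,l',l''}=\lambda_l-\lambda_{l'}-\lambda_{l''}$. *)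

theory Defs
  imports "HOL-Analysis.Analysis"
begin

text \<open>Coordinates: a parameter vector theta in R^d, d = 2L+1, is represented by a function
  nat => real; coordinate 0 is theta^(0), coordinate 2l-1 is theta_1^(l), coordinate 2l is
  theta_2^(l) (1 <= l <= L). Coordinates >= d are never used.\<close>

definition mra_dim :: "nat \<Rightarrow> nat" where
  "mra_dim L = 2 * L + 1"

definition gact :: "nat \<Rightarrow> real \<Rightarrow> (nat \<Rightarrow> real) \<Rightarrow> (nat \<Rightarrow> real)" where
  "gact L t \<theta> i =
     (if i = 0 then \<theta> 0
      else if i \<le> 2 * L then
        (let l = (i + 1) div 2; c = cos (2 * pi * real l * t); s = sin (2 * pi * real l * t) in
          if odd i then c * \<theta> (2 * l - 1) + s * \<theta> (2 * l)
          else - s * \<theta> (2 * l - 1) + c * \<theta> (2 * l))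
      else 0)"

definition tidx :: "nat \<Rightarrow> nat \<Rightarrow> nat list set" where
  "tidx L k = {xs. length xs = k \<and> set xs \<subseteq> {0..<mra_dim L}}"

text \<open>Moment tensor T_k(theta) = integral of (g theta)^{\<otimes>k} against the Haar probability
  measure (Lebesgue measure on [0,1)); entry at index tuple xs.\<close>
definition Tk :: "nat \<Rightarrow> nat \<Rightarrow> (nat \<Rightarrow> real) \<Rightarrow> nat list \<Rightarrow> real" where
  "Tk L k \<theta> xs = integral {0..1} (\<lambda>t. \<Prod>j<k. gact L t \<theta> (xs ! j))"

definition sk :: "nat \<Rightarrow> (nat \<Rightarrow> real) \<Rightarrow> nat \<Rightarrow> (nat \<Rightarrow> real) \<Rightarrow> real" where
  "sk L \<theta>s k \<theta> = 1 / (2 * fact k) * (\<Sum>xs\<in>tidx L k. (Tk L k \<theta> xs - Tk L k \<theta>s xs)^2)"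

definition ucoef :: "nat \<Rightarrow> (nat \<Rightarrow> real) \<Rightarrow> complex" where
  "ucoef l \<theta> = (if l = 0 then complex_of_real (\<theta> 0) else Complex (\<theta> (2 * l - 1)) (\<theta> (2 * l)))"

definition rmag :: "nat \<Rightarrow> (nat \<Rightarrow> real) \<Rightarrow> real" where
  "rmag l \<theta> = cmod (ucoef l \<theta>)"

definition phase :: "nat \<Rightarrow> (nat \<Rightarrow> real) \<Rightarrow> real" where
  "phase l \<theta> = Arg (ucoef l \<theta>)"

definition r3 :: "nat \<Rightarrow> nat \<Rightarrow> nat \<Rightarrow> (nat \<Rightarrow> real) \<Rightarrow> real" where
  "r3 l l' l'' \<theta> = rmag l \<theta> * rmag l' \<theta> * rmag l'' \<theta>"

definition lam3 :: "nat \<Rightarrow> nat \<Rightarrow> nat \<Rightarrow> (nat \<Rightarrow> real) \<Rightarrow> real" where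
  "lam3 l l' l'' \<theta> = phase l \<theta> - phase l' \<theta> - phase l'' \<theta>"

definition triples :: "nat \<Rightarrow> nat \<Rightarrow> (nat \<times> nat \<times> nat) set" where
  "triples lo L = {(l, l', l''). l \<in> {lo..L} \<and> l' \<in> {lo..L} \<and> l'' \<in> {lo..L} \<and> l = l' + l''}"

end

theory Submission
  imports Defs
begin


definition E :: "int \<Rightarrow> real \<Rightarrow> complex" where
  "E N s = exp (\<i> * complex_of_real (2 * pi * real_of_int N * s))"

lemma E_mult: "E M s * E N s = E (M + N) s"
  unfolding E_def by (simp add: exp_add[symmetric] algebra_simps)

lemma E_cnj: "cnj (E N s) = E (- N) s"
  unfolding E_def by (simp add: exp_cnj)

lemma E_cont[continuous_intros]: "continuous_on A (E N)"
  unfolding E_def by (intro continuous_intros)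

lemma E_integral: "((E N) has_integral (if N = 0 then 1 else 0)) {0..1}"
proof (cases "N = 0")
  case True
  then have "E N = (\<lambda>s. 1)" by (auto simp: E_def)
  then show ?thesis using True has_integral_const_real[of "1::complex" 0 1] by simp
next
  case False
  define c where "c = \<i> * complex_of_real (2 * pi * real_of_int N)"
  have c0: "c \<noteq> 0" using False by (simp add: c_def)
  have Ec: "E N s = exp (c * of_real s)" for s
    unfolding E_def c_def by (simp add: algebra_simps)
  have d: "((\<lambda>x. exp (c * of_real x) / c) has_vector_derivative E N x) (at x within A)" for x A
  proof -
    have "((\<lambda>z. exp (c * z) / c) has_field_derivative exp (c * of_real x)) (at (of_real x))"
      using c0 by (auto intro!: derivative_eq_intros)
    from has_vector_derivative_real_field[OF this] show ?thesis by (simp add: Ec)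
  qed
  have "((E N) has_integral (exp (c * of_real 1) / c - exp (c * of_real 0) / c)) {0..1}"
    by (rule fundamental_theorem_of_calculus) (auto intro: d)
  moreover have "exp (c * of_real 1) = 1"
    unfolding c_def using exp_2pi_1_int[of N] by (simp add: algebra_simps)
  ultimately show ?thesis using False by simp
qed

lemma E_add: "E (a + b) s = E a s * E b s"
  by (simp add: E_mult)
lemma E_diff: "E (a - b) s = E a s * cnj (E b s)"
  by (simp add: E_mult E_cnj)
lemma E_uminus: "E (- a) s = cnj (E a s)"
  by (simp add: E_cnj)

lemma ofRe: "complex_of_real (Re w) = (w + cnj w) / 2"
  by (simp add: complex_add_cnj)

lemma hint_E: "((\<lambda>s. c * E N s) has_integral (if N = 0 then c else 0)) {0..1}"
  using has_integral_mult_right[OF E_integral[of N], of c] by (simp split: if_splits)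

lemma real_from_complex:
  assumes "((\<lambda>s. complex_of_real (f s)) has_integral I) A"
  shows "(f has_integral Re I) A"
  using has_integral_linear[OF assms bounded_linear_Re] by (simp add: o_def)

lemma ofRe_mult: "complex_of_real (Re (A * x)) = (A * x + cnj A * cnj x) / 2"
  by (simp only: ofRe complex_cnj_mult)

lemma int1:
  assumes "l \<ge> 1"
  shows "((\<lambda>s. Re (A * E (int l) s)) has_integral 0) {0..1}"
proof -
  have eq: "complex_of_real (Re (A * E (int l) s)) = (1/2) * (A * E (int l) s + cnj A * E (- int l) s)" for s
    by (simp only: ofRe_mult E_uminus) (simp add: algebra_simps)
  have "((\<lambda>s. (1/2) * (A * E (int l) s + cnj A * E (- int l) s)) has_integral
      (1/2) * ((if int l = 0 then A else 0) + (if - int l = 0 then cnj A else 0))) {0..1}"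
    by (intro has_integral_mult_right has_integral_add hint_E)
  moreover have "(1/2) * ((if int l = 0 then A else 0) + (if - int l = 0 then cnj A else 0)) = 0"
    using assms by simp
  ultimately have "((\<lambda>s. complex_of_real (Re (A * E (int l) s))) has_integral 0) {0..1}"
    by (simp only: eq)
  from real_from_complex[OF this] show ?thesis by simp
qed

lemma int2:
  assumes "l \<ge> 1" "m \<ge> 1"
  shows "((\<lambda>s. Re (A * E (int l) s) * Re (B * E (int m) s)) has_integral
     (if l = m then Re (A * cnj B) / 2 else 0)) {0..1}"
proof -
  have eq: "complex_of_real (Re (A * E (int l) s) * Re (B * E (int m) s)) = (1/4) * (
      A * B * E (int l + int m) s + A * cnj B * E (int l - int m) s
    + cnj A * B * E (- int l + int m) s + cnj A * cnj B * E (- int l - int m) s)" for s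
    by (simp only: of_real_mult ofRe_mult E_add E_diff E_uminus complex_cnj_cnj) (simp add: algebra_simps add_divide_distrib)
  have "((\<lambda>s. (1/4) * (
      A * B * E (int l + int m) s + A * cnj B * E (int l - int m) s
    + cnj A * B * E (- int l + int m) s + cnj A * cnj B * E (- int l - int m) s)) has_integral
      (1/4) * ((if int l + int m = 0 then A * B else 0) + (if int l - int m = 0 then A * cnj B else 0)
      + (if - int l + int m = 0 then cnj A * B else 0) + (if - int l - int m = 0 then cnj A * cnj B else 0))) {0..1}"
    by (intro has_integral_mult_right has_integral_add hint_E)
  moreover have "(1/4) * ((if int l + int m = 0 then A * B else 0) + (if int l - int m = 0 then A * cnj B else 0)
      + (if - int l + int m = 0 then cnj A * B else 0) + (if - int l - int m = 0 then cnj A * cnj B else 0))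
      = (1/4) * ((if l = m then A * cnj B + cnj A * B else 0))"
    using assms by auto
  ultimately have "((\<lambda>s. complex_of_real (Re (A * E (int l) s) * Re (B * E (int m) s))) has_integral
     (1/4) * ((if l = m then A * cnj B + cnj A * B else 0))) {0..1}"
    by (simp only: eq)
  note H = real_from_complex[OF this]
  have V: "Re ((1/4) * ((if l = m then A * cnj B + cnj A * B else 0))) = (if l = m then Re (A * cnj B) / 2 else 0)"
    by simp
  show ?thesis using H unfolding V .
qed

lemma int3:
  assumes "l \<ge> 1" "m \<ge> 1" "n \<ge> 1"
  shows "((\<lambda>s. Re (A * E (int l) s) * Re (B * E (int m) s) * Re (C * E (int n) s)) has_integral
     (1/4) * ((if l = m + n then Re (cnj A * B * C) else 0) + (if m = l + n then Re (A * cnj B * C) else 0)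
       + (if n = l + m then Re (A * B * cnj C) else 0))) {0..1}"
proof -
  have eq: "complex_of_real (Re (A * E (int l) s) * Re (B * E (int m) s) * Re (C * E (int n) s)) = (1/8) * (
      A * B * C * E (int l + int m + int n) s + A * B * cnj C * E (int l + int m - int n) s
    + A * cnj B * C * E (int l - int m + int n) s + A * cnj B * cnj C * E (int l - int m - int n) s
    + cnj A * B * C * E (- int l + int m + int n) s + cnj A * B * cnj C * E (- int l + int m - int n) s
    + cnj A * cnj B * C * E (- int l - int m + int n) s + cnj A * cnj B * cnj C * E (- int l - int m - int n) s)" for s
    by (simp only: of_real_mult ofRe_mult E_add E_diff E_uminus complex_cnj_cnj) (simp add: algebra_simps add_divide_distrib)
  have "((\<lambda>s. (1/8) * (
      A * B * C * E (int l + int m + int n) s + A * B * cnj C * E (int l + int m - int n) s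
    + A * cnj B * C * E (int l - int m + int n) s + A * cnj B * cnj C * E (int l - int m - int n) s
    + cnj A * B * C * E (- int l + int m + int n) s + cnj A * B * cnj C * E (- int l + int m - int n) s
    + cnj A * cnj B * C * E (- int l - int m + int n) s + cnj A * cnj B * cnj C * E (- int l - int m - int n) s))
     has_integral (1/8) * (
      (if int l + int m + int n = 0 then A * B * C else 0) + (if int l + int m - int n = 0 then A * B * cnj C else 0)
    + (if int l - int m + int n = 0 then A * cnj B * C else 0) + (if int l - int m - int n = 0 then A * cnj B * cnj C else 0)
    + (if - int l + int m + int n = 0 then cnj A * B * C else 0) + (if - int l + int m - int n = 0 then cnj A * B * cnj C else 0)
    + (if - int l - int m + int n = 0 then cnj A * cnj B * C else 0) + (if - int l - int m - int n = 0 then cnj A * cnj B * cnj C else 0))) {0..1}"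
    by (intro has_integral_mult_right has_integral_add hint_E)
  note H = real_from_complex[OF this[unfolded eq[symmetric]]]
  have V: "Re ((1/8) * (
      (if int l + int m + int n = 0 then A * B * C else 0) + (if int l + int m - int n = 0 then A * B * cnj C else 0)
    + (if int l - int m + int n = 0 then A * cnj B * C else 0) + (if int l - int m - int n = 0 then A * cnj B * cnj C else 0)
    + (if - int l + int m + int n = 0 then cnj A * B * C else 0) + (if - int l + int m - int n = 0 then cnj A * B * cnj C else 0)
    + (if - int l - int m + int n = 0 then cnj A * cnj B * C else 0) + (if - int l - int m - int n = 0 then cnj A * cnj B * cnj C else 0)))
    = (1/4) * ((if l = m + n then Re (cnj A * B * C) else 0) + (if m = l + n then Re (A * cnj B * C) else 0)
       + (if n = l + m then Re (A * B * cnj C) else 0))"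
    using assms by (auto simp: algebra_simps)
  show ?thesis using H unfolding V .
qed

lemma triple_sum:
  fixes H :: "nat \<Rightarrow> nat \<Rightarrow> nat \<Rightarrow> real"
  shows "(\<Sum>l\<in>{1..L}. \<Sum>m\<in>{1..L}. \<Sum>n\<in>{1..L}. if l = m + n then H l m n else 0)
    = (\<Sum>(l, m, n)\<in>triples 1 L. H l m n)"
proof -
  have T: "triples 1 L = {x \<in> {1..L} \<times> {1..L} \<times> {1..L}. fst x = fst (snd x) + snd (snd x)}"
    unfolding triples_def by auto
  have "(\<Sum>l\<in>{1..L}. \<Sum>m\<in>{1..L}. \<Sum>n\<in>{1..L}. if l = m + n then H l m n else 0)
     = (\<Sum>x\<in>{1..L} \<times> {1..L} \<times> {1..L}. if fst x = fst (snd x) + snd (snd x) then H (fst x) (fst (snd x)) (snd (snd x)) else 0)"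
    by (simp add: sum.cartesian_product case_prod_beta)
  also have "\<dots> = (\<Sum>x\<in>triples 1 L. H (fst x) (fst (snd x)) (snd (snd x)))"
    unfolding T by (subst sum.inter_filter) auto
  also have "\<dots> = (\<Sum>(l, m, n)\<in>triples 1 L. H l m n)"
    by (simp add: case_prod_beta)
  finally show ?thesis .
qed

lemma cube_sum:
  fixes f :: "nat \<Rightarrow> real"
  shows "(sum f A)^3 = (\<Sum>l\<in>A. \<Sum>m\<in>A. \<Sum>n\<in>A. f l * f m * f n)"
proof -
  have "(sum f A)^3 = sum f A * (sum f A * sum f A)" by (simp only: power3_eq_cube mult.assoc)
  also have "\<dots> = (\<Sum>l\<in>A. \<Sum>m\<in>A. \<Sum>n\<in>A. f l * (f m * f n))"
    by (simp only: sum_distrib_right) (simp only: sum_distrib_left)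
  also have "\<dots> = (\<Sum>l\<in>A. \<Sum>m\<in>A. \<Sum>n\<in>A. f l * f m * f n)"
    by (simp only: mult.assoc)
  finally show ?thesis .
qed

definition Rf :: "(nat \<Rightarrow> complex) \<Rightarrow> nat \<Rightarrow> real \<Rightarrow> real" where
  "Rf q l s = Re (q l * E (int l) s)"

definition Sf :: "(nat \<Rightarrow> complex) \<Rightarrow> nat \<Rightarrow> real \<Rightarrow> real" where
  "Sf q L s = (\<Sum>l\<in>{1..L}. Rf q l s)"

lemma hS1: "(Sf q L has_integral 0) {0..1}"
proof -
  have "((\<lambda>s. \<Sum>l\<in>{1..L}. Rf q l s) has_integral (\<Sum>l\<in>{1..L}. 0)) {0..1}"
  proof (intro has_integral_sum finite_atLeastAtMost)
    fix l assume "l \<in> {1..L}"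
    then show "((\<lambda>s. Rf q l s) has_integral 0) {0..1}" unfolding Rf_def by (intro int1) auto
  qed
  then show ?thesis by (simp add: Sf_def[abs_def])
qed

lemma hS2: "((\<lambda>s. (Sf q L s)^2) has_integral (1/2) * (\<Sum>l\<in>{1..L}. (cmod (q l))^2)) {0..1}"
proof -
  have "((\<lambda>s. \<Sum>l\<in>{1..L}. \<Sum>m\<in>{1..L}. Rf q l s * Rf q m s) has_integral
      (\<Sum>l\<in>{1..L}. \<Sum>m\<in>{1..L}. if l = m then Re (q l * cnj (q m)) / 2 else 0)) {0..1}"
  proof (intro has_integral_sum finite_atLeastAtMost)
    fix l m assume "l \<in> {1..L}" "m \<in> {1..L}"
    then show "((\<lambda>s. Rf q l s * Rf q m s) has_integral (if l = m then Re (q l * cnj (q m)) / 2 else 0)) {0..1}"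
      unfolding Rf_def by (intro int2) auto
  qed
  moreover have "(\<lambda>s. \<Sum>l\<in>{1..L}. \<Sum>m\<in>{1..L}. Rf q l s * Rf q m s) = (\<lambda>s. (Sf q L s)^2)"
    by (simp add: Sf_def power2_eq_square sum_product)
  moreover have "(\<Sum>l\<in>{1..L}. \<Sum>m\<in>{1..L}. if l = m then Re (q l * cnj (q m)) / 2 else 0)
     = (1/2) * (\<Sum>l\<in>{1..L}. (cmod (q l))^2)"
    by (simp add: sum_divide_distrib cmod_power2 sum_distrib_left) (simp add: power2_eq_square)
  ultimately show ?thesis by (simp only:)
qed

lemma hS3: "((\<lambda>s. (Sf q L s)^3) has_integral (3/4) * (\<Sum>(l, m, n)\<in>triples 1 L. Re (cnj (q l) * q m * q n))) {0..1}"
proof -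
  define G where "G l m n = (if l = m + n then Re (cnj (q l) * q m * q n) else 0)" for l m n
  have "((\<lambda>s. \<Sum>l\<in>{1..L}. \<Sum>m\<in>{1..L}. \<Sum>n\<in>{1..L}. Rf q l s * Rf q m s * Rf q n s) has_integral
      (\<Sum>l\<in>{1..L}. \<Sum>m\<in>{1..L}. \<Sum>n\<in>{1..L}. (1/4) * (G l m n + G m l n + G n l m))) {0..1}"
  proof (intro has_integral_sum finite_atLeastAtMost)
    fix l m n assume lmn: "l \<in> {1..L}" "m \<in> {1..L}" "n \<in> {1..L}"
    have V: "(1/4) * ((if l = m + n then Re (cnj (q l) * q m * q n) else 0) + (if m = l + n then Re (q l * cnj (q m) * q n) else 0)
       + (if n = l + m then Re (q l * q m * cnj (q n)) else 0)) = (1/4) * (G l m n + G m l n + G n l m)"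
    proof -
      have "q l * cnj (q m) * q n = cnj (q m) * q l * q n" "q l * q m * cnj (q n) = cnj (q n) * q l * q m"
        by (simp_all only: ac_simps)
      then show ?thesis unfolding G_def by (simp only:)
    qed
    show "((\<lambda>s. Rf q l s * Rf q m s * Rf q n s) has_integral (1/4) * (G l m n + G m l n + G n l m)) {0..1}"
      using int3[of l m n "q l" "q m" "q n"] lmn unfolding V Rf_def by simp
  qed
  moreover have "(\<lambda>s. \<Sum>l\<in>{1..L}. \<Sum>m\<in>{1..L}. \<Sum>n\<in>{1..L}. Rf q l s * Rf q m s * Rf q n s) = (\<lambda>s. (Sf q L s)^3)"
    unfolding Sf_def cube_sum by (rule refl)
  moreover have "(\<Sum>l\<in>{1..L}. \<Sum>m\<in>{1..L}. \<Sum>n\<in>{1..L}. (1/4) * (G l m n + G m l n + G n l m))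
     = (3/4) * (\<Sum>(l, m, n)\<in>triples 1 L. Re (cnj (q l) * q m * q n))"
  proof -
    have a: "(\<Sum>l\<in>{1..L}. \<Sum>m\<in>{1..L}. \<Sum>n\<in>{1..L}. G m l n) = (\<Sum>l\<in>{1..L}. \<Sum>m\<in>{1..L}. \<Sum>n\<in>{1..L}. G l m n)"
      by (rule sum.swap)
    have b: "(\<Sum>l\<in>{1..L}. \<Sum>m\<in>{1..L}. \<Sum>n\<in>{1..L}. G n l m) = (\<Sum>l\<in>{1..L}. \<Sum>m\<in>{1..L}. \<Sum>n\<in>{1..L}. G l m n)"
    proof -
      have "(\<Sum>l\<in>{1..L}. \<Sum>m\<in>{1..L}. \<Sum>n\<in>{1..L}. G n l m) = (\<Sum>l\<in>{1..L}. \<Sum>n\<in>{1..L}. \<Sum>m\<in>{1..L}. G n l m)"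
        by (intro sum.cong refl sum.swap)
      also have "\<dots> = (\<Sum>n\<in>{1..L}. \<Sum>l\<in>{1..L}. \<Sum>m\<in>{1..L}. G n l m)"
        by (rule sum.swap)
      finally show ?thesis .
    qed
    have c: "(\<Sum>l\<in>{1..L}. \<Sum>m\<in>{1..L}. \<Sum>n\<in>{1..L}. G l m n) = (\<Sum>(l, m, n)\<in>triples 1 L. Re (cnj (q l) * q m * q n))"
      unfolding G_def by (rule triple_sum)
    have d: "(\<Sum>l\<in>{1..L}. \<Sum>m\<in>{1..L}. \<Sum>n\<in>{1..L}. (1/4) * (G l m n + G m l n + G n l m))
       = (1/4) * ((\<Sum>l\<in>{1..L}. \<Sum>m\<in>{1..L}. \<Sum>n\<in>{1..L}. G l m n) + (\<Sum>l\<in>{1..L}. \<Sum>m\<in>{1..L}. \<Sum>n\<in>{1..L}. G m l n)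
          + (\<Sum>l\<in>{1..L}. \<Sum>m\<in>{1..L}. \<Sum>n\<in>{1..L}. G n l m))"
      by (simp only: sum.distrib sum_distrib_left distrib_left)
    have aux: "(1/4) * (X + X + X) = (3/4) * X" for X :: real by simp
    show ?thesis unfolding d a b c by (rule aux)
  qed
  ultimately show ?thesis by (simp only:)
qed

lemma const_int: "((\<lambda>s::real. c) has_integral (c::real)) {0..1}"
  using has_integral_const_real[of c 0 1] by simp

lemma core1: "((\<lambda>s. (a + Sf q L s)^1) has_integral a) {0..1}"
  using has_integral_add[OF const_int[of a] hS1[of q L]] by simp

lemma core2: "((\<lambda>s. (a + Sf q L s)^2) has_integral a^2 + (1/2) * (\<Sum>l\<in>{1..L}. (cmod (q l))^2)) {0..1}"
proof -
  have "((\<lambda>s. a^2 + 2 * a * Sf q L s + (Sf q L s)^2) has_integral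
      a^2 + 2 * a * 0 + (1/2) * (\<Sum>l\<in>{1..L}. (cmod (q l))^2)) {0..1}"
    by (intro has_integral_add const_int has_integral_mult_right hS1 hS2)
  moreover have "(\<lambda>s. a^2 + 2 * a * Sf q L s + (Sf q L s)^2) = (\<lambda>s. (a + Sf q L s)^2)"
    by (simp add: power2_eq_square algebra_simps)
  ultimately show ?thesis by simp
qed

lemma core3: "((\<lambda>s. (a + Sf q L s)^3) has_integral a^3 + (3/2) * a * (\<Sum>l\<in>{1..L}. (cmod (q l))^2)
   + (3/4) * (\<Sum>(l, m, n)\<in>triples 1 L. Re (cnj (q l) * q m * q n))) {0..1}"
proof -
  have "((\<lambda>s. a^3 + 3 * a^2 * Sf q L s + 3 * a * (Sf q L s)^2 + (Sf q L s)^3) has_integral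
      a^3 + 3 * a^2 * 0 + 3 * a * ((1/2) * (\<Sum>l\<in>{1..L}. (cmod (q l))^2))
    + (3/4) * (\<Sum>(l, m, n)\<in>triples 1 L. Re (cnj (q l) * q m * q n))) {0..1}"
    by (intro has_integral_add const_int has_integral_mult_right hS1 hS2 hS3)
  moreover have "(\<lambda>s. a^3 + 3 * a^2 * Sf q L s + 3 * a * (Sf q L s)^2 + (Sf q L s)^3) = (\<lambda>s. (a + Sf q L s)^3)"
    by (simp add: power2_eq_square power3_eq_cube algebra_simps)
  moreover have "a^3 + 3 * a^2 * 0 + 3 * a * ((1/2) * (\<Sum>l\<in>{1..L}. (cmod (q l))^2))
    + (3/4) * (\<Sum>(l, m, n)\<in>triples 1 L. Re (cnj (q l) * q m * q n)) = a^3 + (3/2) * a * (\<Sum>l\<in>{1..L}. (cmod (q l))^2)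
   + (3/4) * (\<Sum>(l, m, n)\<in>triples 1 L. Re (cnj (q l) * q m * q n))" by simp
  ultimately show ?thesis by (simp only:)
qed

lemma sum_lists_prod:
  fixes f :: "nat \<Rightarrow> real"
  assumes "finite A"
  shows "(\<Sum>xs\<in>{xs. length xs = k \<and> set xs \<subseteq> A}. \<Prod>j<k. f (xs ! j)) = (\<Sum>a\<in>A. f a)^k"
proof (induction k)
  case 0
  have "{xs. length xs = 0 \<and> set xs \<subseteq> A} = {[]}" by auto
  then show ?case by simp
next
  case (Suc k)
  have eq: "{xs. length xs = Suc k \<and> set xs \<subseteq> A} = (\<lambda>(xs, n). n#xs) ` ({xs. set xs \<subseteq> A \<and> length xs = k} \<times> A)"
    using lists_length_Suc_eq[of A k] by (simp add: conj_commute)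
  have inj: "inj_on (\<lambda>(xs, n). n#xs) ({xs. set xs \<subseteq> A \<and> length xs = k} \<times> A)"
    by (auto simp: inj_on_def)
  have "(\<Sum>xs\<in>{xs. length xs = Suc k \<and> set xs \<subseteq> A}. \<Prod>j<Suc k. f (xs ! j))
      = (\<Sum>(xs, a)\<in>{xs. set xs \<subseteq> A \<and> length xs = k} \<times> A. \<Prod>j<Suc k. f ((a#xs) ! j))"
    unfolding eq by (subst sum.reindex[OF inj]) (simp add: case_prod_beta)
  also have "\<dots> = (\<Sum>(xs, a)\<in>{xs. set xs \<subseteq> A \<and> length xs = k} \<times> A. f a * (\<Prod>j<k. f (xs ! j)))"
    by (simp only: prod.lessThan_Suc_shift nth_Cons_0 nth_Cons_Suc)
  also have "\<dots> = (\<Sum>xs\<in>{xs. set xs \<subseteq> A \<and> length xs = k}. \<Sum>a\<in>A. f a * (\<Prod>j<k. f (xs ! j)))"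
    by (simp add: sum.cartesian_product)
  also have "\<dots> = (\<Sum>a\<in>A. f a) * (\<Sum>xs\<in>{xs. length xs = k \<and> set xs \<subseteq> A}. \<Prod>j<k. f (xs ! j))"
    by (simp add: sum_distrib_left sum_distrib_right conj_commute mult.commute)
  finally show ?case using Suc by simp
qed

lemma gact_cont: "continuous_on A (\<lambda>t. gact L t \<theta> i)"
proof (cases "i = 0")
  case True then show ?thesis by (simp add: gact_def)
next
  case False
  then show ?thesis
    by (cases "i \<le> 2 * L"; cases "odd i") (simp_all add: gact_def Let_def, (intro continuous_intros)+)
qed

lemma Q_formula:
  "(\<Sum>xs\<in>tidx L k. Tk L k \<theta> xs * Tk L k \<eta> xs)
   = integral {0..1} (\<lambda>t. integral {0..1} (\<lambda>s. (\<Sum>i<2*L+1. gact L t \<theta> i * gact L s \<eta> i)^k))"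
proof -
  define F where "F xs t = (\<Prod>j<k. gact L t \<theta> (xs ! j))" for xs t
  define G where "G xs s = (\<Prod>j<k. gact L s \<eta> (xs ! j))" for xs s
  have cF: "continuous_on {0..1} (F xs)" for xs unfolding F_def[abs_def] by (intro continuous_intros gact_cont)
  have cG: "continuous_on {0..1} (G xs)" for xs unfolding G_def[abs_def] by (intro continuous_intros gact_cont)
  have fin: "finite (tidx L k)"
    unfolding tidx_def using finite_lists_length_eq[of "{0..<mra_dim L}" k] by (simp add: conj_commute)
  have "(\<Sum>xs\<in>tidx L k. Tk L k \<theta> xs * Tk L k \<eta> xs)
     = (\<Sum>xs\<in>tidx L k. integral {0..1} (\<lambda>t. integral {0..1} (\<lambda>s. F xs t * G xs s)))"
    by (simp add: Tk_def F_def G_def)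
  also have "\<dots> = integral {0..1} (\<lambda>t. \<Sum>xs\<in>tidx L k. integral {0..1} (\<lambda>s. F xs t * G xs s))"
  proof (rule integral_sum[symmetric, OF fin])
    fix xs
    have "continuous_on {0..1} (\<lambda>t. F xs t * integral {0..1} (G xs))"
      by (intro continuous_intros cF)
    then show "(\<lambda>t. integral {0..1} (\<lambda>s. F xs t * G xs s)) integrable_on {0..1}"
      by (simp add: integrable_continuous_interval)
  qed
  also have "\<dots> = integral {0..1} (\<lambda>t. integral {0..1} (\<lambda>s. \<Sum>xs\<in>tidx L k. F xs t * G xs s))"
  proof (rule integral_cong)
    fix t
    show "(\<Sum>xs\<in>tidx L k. integral {0..1} (\<lambda>s. F xs t * G xs s)) = integral {0..1} (\<lambda>s. \<Sum>xs\<in>tidx L k. F xs t * G xs s)"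
    proof (rule integral_sum[symmetric, OF fin])
      fix xs
      have "continuous_on {0..1} (\<lambda>s. F xs t * G xs s)"
        by (intro continuous_intros cG)
      then show "(\<lambda>s. F xs t * G xs s) integrable_on {0..1}"
        by (simp add: integrable_continuous_interval)
    qed
  qed
  also have "\<dots> = integral {0..1} (\<lambda>t. integral {0..1} (\<lambda>s. (\<Sum>i<2*L+1. gact L t \<theta> i * gact L s \<eta> i)^k))"
  proof (intro integral_cong)
    fix t s
    have "(\<Sum>xs\<in>tidx L k. F xs t * G xs s) = (\<Sum>xs\<in>{xs. length xs = k \<and> set xs \<subseteq> {0..<2*L+1}}. \<Prod>j<k. gact L t \<theta> (xs ! j) * gact L s \<eta> (xs ! j))"
      by (simp add: tidx_def mra_dim_def F_def G_def prod.distrib)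
    also have "\<dots> = (\<Sum>i\<in>{0..<2*L+1}. gact L t \<theta> i * gact L s \<eta> i)^k"
      by (rule sum_lists_prod) simp
    finally show "(\<Sum>xs\<in>tidx L k. F xs t * G xs s) = (\<Sum>i<2*L+1. gact L t \<theta> i * gact L s \<eta> i)^k"
      by (simp add: atLeast0LessThan)
  qed
  finally show ?thesis .
qed

lemma split_sum:
  fixes f :: "nat \<Rightarrow> real" and L :: nat
  shows "(\<Sum>i<2*L+1. f i) = f 0 + (\<Sum>l\<in>{1..L}. f (2*l-1) + f (2*l))"
proof (induction L)
  case 0 then show ?case by simp
next
  case (Suc L)
  have "(\<Sum>i<2*Suc L+1. f i) = (\<Sum>i<2*L+1. f i) + f (2*L+1) + f (2*L+2)"
    by (simp add: algebra_simps)
  also have "\<dots> = f 0 + (\<Sum>l\<in>{1..Suc L}. f (2*l-1) + f (2*l))"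
    using Suc by simp
  finally show ?case .
qed

definition qf :: "(nat \<Rightarrow> real) \<Rightarrow> (nat \<Rightarrow> real) \<Rightarrow> real \<Rightarrow> nat \<Rightarrow> complex" where
  "qf \<theta> \<eta> t l = ucoef l \<theta> * cnj (ucoef l \<eta>) * E (- int l) t"

lemma E_cis: "E N s = cis (2 * pi * real_of_int N * s)"
  by (simp add: E_def cis_conv_exp)

lemma block:
  assumes "1 \<le> l" "l \<le> L"
  shows "gact L t \<theta> (2*l-1) * gact L s \<eta> (2*l-1) + gact L t \<theta> (2*l) * gact L s \<eta> (2*l) = Rf (qf \<theta> \<eta> t) l s"
proof -
  have i1: "(2*l-1+1) div 2 = l" "(2*l+1) div 2 = l" "odd (2*l-1)" "2*l-1 \<noteq> 0" "2*l-1 \<le> 2*L"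
     "2*l \<noteq> 0" "2*l \<le> 2*L" "\<not> odd (2*l)"
    using assms by auto
  show ?thesis
    unfolding gact_def Let_def Rf_def qf_def E_cis ucoef_def using i1 assms
    by (simp add: algebra_simps)
qed

lemma inner: "(\<Sum>i<2*L+1. gact L t \<theta> i * gact L s \<eta> i) = \<theta> 0 * \<eta> 0 + Sf (qf \<theta> \<eta> t) L s"
proof -
  have g0: "gact L t \<theta> 0 = \<theta> 0" "gact L s \<eta> 0 = \<eta> 0" by (simp_all add: gact_def)
  have "(\<Sum>l\<in>{1..L}. gact L t \<theta> (2*l-1) * gact L s \<eta> (2*l-1) + gact L t \<theta> (2*l) * gact L s \<eta> (2*l))
     = (\<Sum>l\<in>{1..L}. Rf (qf \<theta> \<eta> t) l s)"
    by (intro sum.cong refl block) auto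
  then show ?thesis unfolding split_sum Sf_def g0 by simp
qed

lemma cmod_E: "cmod (E N s) = 1"
  by (simp add: E_cis)

lemma cmod_qf: "cmod (qf \<theta> \<eta> t l) = rmag l \<theta> * rmag l \<eta>"
  by (simp add: qf_def norm_mult cmod_E rmag_def)

definition X3 :: "nat \<Rightarrow> nat \<Rightarrow> nat \<Rightarrow> (nat \<Rightarrow> real) \<Rightarrow> complex" where
  "X3 l m n \<theta> = ucoef l \<theta> * cnj (ucoef m \<theta> * ucoef n \<theta>)"

lemma qf_triple:
  assumes "l = m + n"
  shows "cnj (qf \<theta> \<eta> t l) * qf \<theta> \<eta> t m * qf \<theta> \<eta> t n = cnj (X3 l m n \<theta>) * X3 l m n \<eta>"
proof -
  have e1: "E (- int m) t * E (- int n) t = E (- int l) t" using assms by (simp add: E_mult)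
  have e2: "cnj (E (- int l) t) * E (- int l) t = 1" by (simp only: E_cnj E_mult) (simp add: E_def)
  have "cnj (qf \<theta> \<eta> t l) * qf \<theta> \<eta> t m * qf \<theta> \<eta> t n
     = (cnj (ucoef l \<theta>) * ucoef l \<eta> * ucoef m \<theta> * cnj (ucoef m \<eta>) * ucoef n \<theta> * cnj (ucoef n \<eta>))
       * (cnj (E (- int l) t) * (E (- int m) t * E (- int n) t))"
    by (simp add: qf_def ac_simps)
  also have "\<dots> = cnj (ucoef l \<theta>) * ucoef l \<eta> * ucoef m \<theta> * cnj (ucoef m \<eta>) * ucoef n \<theta> * cnj (ucoef n \<eta>)"
    by (simp only: e1 e2 mult_1_right)
  also have "\<dots> = cnj (X3 l m n \<theta>) * X3 l m n \<eta>"
    by (simp add: X3_def ac_simps)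
  finally show ?thesis .
qed


lemma Q1: "(\<Sum>xs\<in>tidx L 1. Tk L 1 \<theta> xs * Tk L 1 \<eta> xs) = \<theta> 0 * \<eta> 0"
proof -
  have "integral {0..1} (\<lambda>s. (\<Sum>i<2*L+1. gact L t \<theta> i * gact L s \<eta> i)^1) = \<theta> 0 * \<eta> 0" for t
    unfolding inner by (rule integral_unique[OF core1])
  then show ?thesis unfolding Q_formula by simp
qed

lemma Q2: "(\<Sum>xs\<in>tidx L 2. Tk L 2 \<theta> xs * Tk L 2 \<eta> xs) = (\<theta> 0 * \<eta> 0)^2
   + (1/2) * (\<Sum>l\<in>{1..L}. (rmag l \<theta> * rmag l \<eta>)^2)"
proof -
  have "integral {0..1} (\<lambda>s. (\<Sum>i<2*L+1. gact L t \<theta> i * gact L s \<eta> i)^2) = (\<theta> 0 * \<eta> 0)^2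
   + (1/2) * (\<Sum>l\<in>{1..L}. (rmag l \<theta> * rmag l \<eta>)^2)" for t
    unfolding inner using integral_unique[OF core2] by (simp add: cmod_qf)
  then show ?thesis unfolding Q_formula by simp
qed

lemma Q3: "(\<Sum>xs\<in>tidx L 3. Tk L 3 \<theta> xs * Tk L 3 \<eta> xs) = (\<theta> 0 * \<eta> 0)^3
   + (3/2) * (\<theta> 0 * \<eta> 0) * (\<Sum>l\<in>{1..L}. (rmag l \<theta> * rmag l \<eta>)^2)
   + (3/4) * (\<Sum>(l, m, n)\<in>triples 1 L. Re (cnj (X3 l m n \<theta>) * X3 l m n \<eta>))"
proof -
  have tr: "(\<Sum>(l, m, n)\<in>triples 1 L. Re (cnj (qf \<theta> \<eta> t l) * qf \<theta> \<eta> t m * qf \<theta> \<eta> t n))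
      = (\<Sum>(l, m, n)\<in>triples 1 L. Re (cnj (X3 l m n \<theta>) * X3 l m n \<eta>))" for t
  proof (rule sum.cong[OF refl])
    fix x assume "x \<in> triples 1 L"
    then obtain l m n where x: "x = (l, m, n)" and lmn: "l = m + n" unfolding triples_def by auto
    show "(case x of (l, m, n) \<Rightarrow> Re (cnj (qf \<theta> \<eta> t l) * qf \<theta> \<eta> t m * qf \<theta> \<eta> t n))
      = (case x of (l, m, n) \<Rightarrow> Re (cnj (X3 l m n \<theta>) * X3 l m n \<eta>))"
      unfolding x prod.case qf_triple[OF lmn] ..
  qed
  have "integral {0..1} (\<lambda>s. (\<Sum>i<2*L+1. gact L t \<theta> i * gact L s \<eta> i)^3) = (\<theta> 0 * \<eta> 0)^3
   + (3/2) * (\<theta> 0 * \<eta> 0) * (\<Sum>l\<in>{1..L}. (rmag l \<theta> * rmag l \<eta>)^2)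
   + (3/4) * (\<Sum>(l, m, n)\<in>triples 1 L. Re (cnj (X3 l m n \<theta>) * X3 l m n \<eta>))" for t
    unfolding inner integral_unique[OF core3] tr by (simp add: cmod_qf)
  then show ?thesis unfolding Q_formula by simp
qed

lemma sk_Q: "sk L \<theta>s k \<theta> = 1 / (2 * fact k) *
   ((\<Sum>xs\<in>tidx L k. Tk L k \<theta> xs * Tk L k \<theta> xs) - 2 * (\<Sum>xs\<in>tidx L k. Tk L k \<theta> xs * Tk L k \<theta>s xs)
    + (\<Sum>xs\<in>tidx L k. Tk L k \<theta>s xs * Tk L k \<theta>s xs))"
proof -
  have "(\<Sum>xs\<in>tidx L k. (Tk L k \<theta> xs - Tk L k \<theta>s xs)^2) =
    (\<Sum>xs\<in>tidx L k. Tk L k \<theta> xs * Tk L k \<theta> xs - 2 * (Tk L k \<theta> xs * Tk L k \<theta>s xs) + Tk L k \<theta>s xs * Tk L k \<theta>s xs)"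
    by (intro sum.cong refl) (simp add: power2_eq_square algebra_simps)
  also have "\<dots> = (\<Sum>xs\<in>tidx L k. Tk L k \<theta> xs * Tk L k \<theta> xs) - 2 * (\<Sum>xs\<in>tidx L k. Tk L k \<theta> xs * Tk L k \<theta>s xs)
    + (\<Sum>xs\<in>tidx L k. Tk L k \<theta>s xs * Tk L k \<theta>s xs)"
    by (simp add: sum.distrib sum_subtractf sum_distrib_left)
  finally show ?thesis unfolding sk_def by simp
qed

lemma sum_comb:
  fixes f g h :: "nat \<Rightarrow> real"
  shows "(\<Sum>l\<in>A. f l) - 2 * (\<Sum>l\<in>A. g l) + (\<Sum>l\<in>A. h l) = (\<Sum>l\<in>A. f l - 2 * g l + h l)"
  by (simp add: sum.distrib sum_subtractf sum_distrib_left)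

lemma sum_comb3:
  fixes f g h :: "nat \<times> nat \<times> nat \<Rightarrow> real"
  shows "(\<Sum>x\<in>A. f x) - 2 * (\<Sum>x\<in>A. g x) + (\<Sum>x\<in>A. h x) = (\<Sum>x\<in>A. f x - 2 * g x + h x)"
  by (simp add: sum.distrib sum_subtractf sum_distrib_left)



lemma ucoef_polar: "ucoef l \<theta> = complex_of_real (rmag l \<theta>) * cis (phase l \<theta>)"
  using rcis_cmod_Arg[of "ucoef l \<theta>"] by (simp add: rcis_def rmag_def phase_def)

lemma X3_polar: "X3 l m n \<theta> = complex_of_real (r3 l m n \<theta>) * cis (lam3 l m n \<theta>)"
proof -
  have "X3 l m n \<theta> = complex_of_real (rmag l \<theta> * rmag m \<theta> * rmag n \<theta>) *
     (cis (phase l \<theta>) * cnj (cis (phase m \<theta>)) * cnj (cis (phase n \<theta>)))"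
    unfolding X3_def by (subst (1 2 3) ucoef_polar) (simp add: ac_simps)
  also have "cis (phase l \<theta>) * cnj (cis (phase m \<theta>)) * cnj (cis (phase n \<theta>)) = cis (lam3 l m n \<theta>)"
    by (simp only: lam3_def cis_cnj cis_mult) (simp add: algebra_simps)
  finally show ?thesis by (simp add: r3_def)
qed

lemma cnjX3: "Re (cnj (X3 l m n \<theta>) * X3 l m n \<eta>) = r3 l m n \<theta> * r3 l m n \<eta> * cos (lam3 l m n \<eta> - lam3 l m n \<theta>)"
  unfolding X3_polar by (simp add: cos_diff algebra_simps)

lemma cnjX3_self: "Re (cnj (X3 l m n \<theta>) * X3 l m n \<theta>) = (r3 l m n \<theta>)^2"
  unfolding cnjX3 by (simp add: power2_eq_square)

lemma tri_pt: "Re (cnj (X3 l m n \<theta>) * X3 l m n \<theta>) - 2 * Re (cnj (X3 l m n \<theta>) * X3 l m n \<eta>) + Re (cnj (X3 l m n \<eta>) * X3 l m n \<eta>)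
  = r3 l m n \<theta> ^ 2 + r3 l m n \<eta> ^ 2 - 2 * r3 l m n \<theta> * r3 l m n \<eta> * cos (lam3 l m n \<eta> - lam3 l m n \<theta>)"
  unfolding cnjX3_self cnjX3 by simp

lemma cmod_diff_sq: "cmod (a - b)^2 = Re (cnj a * a) - 2 * Re (cnj a * b) + Re (cnj b * b)"
  by (simp only: cmod_power2) (simp add: power2_eq_square algebra_simps)

lemma finite_triples: "finite (triples lo L)"
proof -
  have "triples lo L \<subseteq> {lo..L} \<times> {lo..L} \<times> {lo..L}" unfolding triples_def by auto
  then show ?thesis by (rule finite_subset) simp
qed

lemma triples_split:
  fixes g :: "nat \<times> nat \<times> nat \<Rightarrow> real"
  shows "(\<Sum>x\<in>triples 0 L. g x) = g (0, 0, 0) + (\<Sum>l\<in>{1..L}. g (l, l, 0)) + (\<Sum>l\<in>{1..L}. g (l, 0, l))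
     + (\<Sum>x\<in>triples 1 L. g x)"
proof -
  define A1 where "A1 = (\<lambda>l. (l, l, 0::nat)) ` {1..L}"
  define A2 where "A2 = (\<lambda>l. (l, 0::nat, l)) ` {1..L}"
  have eq: "triples 0 L = insert (0, 0, 0) (A1 \<union> A2 \<union> triples 1 L)"
  proof
    show "triples 0 L \<subseteq> insert (0, 0, 0) (A1 \<union> A2 \<union> triples 1 L)"
    proof
      fix x assume x: "x \<in> triples 0 L"
      obtain l m n where xe: "x = (l, m, n)" by (cases x) auto
      have h: "l = m + n" "l \<le> L" "m \<le> L" "n \<le> L" using x xe unfolding triples_def by auto
      show "x \<in> insert (0, 0, 0) (A1 \<union> A2 \<union> triples 1 L)"
      proof (cases "m = 0")
        case True
        then show ?thesis using h xe by (cases "n = 0") (auto simp: A2_def)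
      next
        case False
        then show ?thesis using h xe by (cases "n = 0") (auto simp: A1_def triples_def)
      qed
    qed
    show "insert (0, 0, 0) (A1 \<union> A2 \<union> triples 1 L) \<subseteq> triples 0 L"
      unfolding A1_def A2_def triples_def by auto
  qed
  have fin1: "finite A1" "finite A2" unfolding A1_def A2_def by auto
  have "(\<Sum>x\<in>triples 0 L. g x) = g (0, 0, 0) + ((\<Sum>x\<in>A1. g x) + (\<Sum>x\<in>A2. g x) + (\<Sum>x\<in>triples 1 L. g x))"
  proof -
    have d1: "A1 \<inter> A2 = {}" "(A1 \<union> A2) \<inter> triples 1 L = {}" "(0, 0, 0) \<notin> A1 \<union> A2 \<union> triples 1 L"
      unfolding A1_def A2_def triples_def by auto
    have "(\<Sum>x\<in>triples 0 L. g x) = g (0, 0, 0) + (\<Sum>x\<in>A1 \<union> A2 \<union> triples 1 L. g x)"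
      unfolding eq by (rule sum.insert) (use fin1 finite_triples d1 in auto)
    also have "(\<Sum>x\<in>A1 \<union> A2 \<union> triples 1 L. g x) = (\<Sum>x\<in>A1 \<union> A2. g x) + (\<Sum>x\<in>triples 1 L. g x)"
      by (rule sum.union_disjoint) (use fin1 finite_triples d1 in auto)
    also have "(\<Sum>x\<in>A1 \<union> A2. g x) = (\<Sum>x\<in>A1. g x) + (\<Sum>x\<in>A2. g x)"
      by (rule sum.union_disjoint) (use fin1 d1 in auto)
    finally show ?thesis by simp
  qed
  also have "(\<Sum>x\<in>A1. g x) = (\<Sum>l\<in>{1..L}. g (l, l, 0))"
    unfolding A1_def by (subst sum.reindex) (auto simp: inj_on_def)
  also have "(\<Sum>x\<in>A2. g x) = (\<Sum>l\<in>{1..L}. g (l, 0, l))"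
    unfolding A2_def by (subst sum.reindex) (auto simp: inj_on_def)
  finally show ?thesis by simp
qed

lemma P1: "sk L \<theta>s 1 \<theta> = 1/2 * (\<theta> 0 - \<theta>s 0)^2"
  unfolding sk_Q Q1 by (simp add: power2_eq_square algebra_simps)

lemma arith2:
  fixes a b A B C :: real
  shows "1 / (2 * 2) * (((a*a)^2 + 1/2 * A) - 2 * ((a*b)^2 + 1/2 * B) + ((b*b)^2 + 1/2 * C))
    = 1/4 * (a^2 - b^2)^2 + 1/8 * (A - 2 * B + C)"
  by (simp add: power2_eq_square algebra_simps)

lemma P2: "sk L \<theta>s 2 \<theta> = 1/4 * ((\<theta> 0)^2 - (\<theta>s 0)^2)^2
        + 1/8 * (\<Sum>l=1..L. (rmag l \<theta> ^ 2 - rmag l \<theta>s ^ 2)^2)"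
proof -
  have e: "(\<Sum>l=1..L. (rmag l \<theta> ^ 2 - rmag l \<theta>s ^ 2)^2) =
    (\<Sum>l\<in>{1..L}. (rmag l \<theta> * rmag l \<theta>)^2) - 2 * (\<Sum>l\<in>{1..L}. (rmag l \<theta> * rmag l \<theta>s)^2) + (\<Sum>l\<in>{1..L}. (rmag l \<theta>s * rmag l \<theta>s)^2)"
    unfolding sum_comb by (intro sum.cong refl) (simp add: power2_eq_square algebra_simps)
  have f2: "fact 2 = (2::real)" by (simp add: eval_nat_numeral)
  show ?thesis unfolding sk_Q Q2 e f2 by (rule arith2)
qed

lemma arith3:
  fixes a b A B C T1 T2 T3 :: real
  shows "1 / (2 * 6) * (((a*a)^3 + 3/2 * (a*a) * A + 3/4 * T1) - 2 * ((a*b)^3 + 3/2 * (a*b) * B + 3/4 * T2)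
     + ((b*b)^3 + 3/2 * (b*b) * C + 3/4 * T3))
  = 1/12 * (a^3 - b^3)^2 + 1/8 * (a*a*A - 2*(a*b)*B + b*b*C) + 1/16 * (T1 - 2 * T2 + T3)"
  by (simp add: power2_eq_square power3_eq_cube algebra_simps)

lemma P3: "sk L \<theta>s 3 \<theta> = 1/12 * ((\<theta> 0)^3 - (\<theta>s 0)^3)^2
        + 1/8 * (\<Sum>l=1..L. (\<theta> 0 * rmag l \<theta> ^ 2 - \<theta>s 0 * rmag l \<theta>s ^ 2)^2)
        + 1/16 * (\<Sum>(l, l', l'')\<in>triples 1 L.
            r3 l l' l'' \<theta> ^ 2 + r3 l l' l'' \<theta>s ^ 2
            - 2 * r3 l l' l'' \<theta> * r3 l l' l'' \<theta>s * cos (lam3 l l' l'' \<theta>s - lam3 l l' l'' \<theta>))"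
proof -
  have e1: "(\<Sum>l=1..L. (\<theta> 0 * rmag l \<theta> ^ 2 - \<theta>s 0 * rmag l \<theta>s ^ 2)^2) =
    \<theta> 0 * \<theta> 0 * (\<Sum>l\<in>{1..L}. (rmag l \<theta> * rmag l \<theta>)^2) - 2 * (\<theta> 0 * \<theta>s 0) * (\<Sum>l\<in>{1..L}. (rmag l \<theta> * rmag l \<theta>s)^2)
     + \<theta>s 0 * \<theta>s 0 * (\<Sum>l\<in>{1..L}. (rmag l \<theta>s * rmag l \<theta>s)^2)"
  proof -
    have "\<theta> 0 * \<theta> 0 * (\<Sum>l\<in>{1..L}. (rmag l \<theta> * rmag l \<theta>)^2) - 2 * (\<theta> 0 * \<theta>s 0) * (\<Sum>l\<in>{1..L}. (rmag l \<theta> * rmag l \<theta>s)^2)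
     + \<theta>s 0 * \<theta>s 0 * (\<Sum>l\<in>{1..L}. (rmag l \<theta>s * rmag l \<theta>s)^2) =
     (\<Sum>l\<in>{1..L}. \<theta> 0 * \<theta> 0 * (rmag l \<theta> * rmag l \<theta>)^2 - 2 * (\<theta> 0 * \<theta>s 0) * (rmag l \<theta> * rmag l \<theta>s)^2
     + \<theta>s 0 * \<theta>s 0 * (rmag l \<theta>s * rmag l \<theta>s)^2)"
      by (simp add: sum.distrib sum_subtractf sum_distrib_left mult.assoc)
    also have "\<dots> = (\<Sum>l=1..L. (\<theta> 0 * rmag l \<theta> ^ 2 - \<theta>s 0 * rmag l \<theta>s ^ 2)^2)"
      by (intro sum.cong refl) (simp add: power2_eq_square algebra_simps)
    finally show ?thesis by simp
  qed
  have e2: "(\<Sum>(l, l', l'')\<in>triples 1 L.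
            r3 l l' l'' \<theta> ^ 2 + r3 l l' l'' \<theta>s ^ 2
            - 2 * r3 l l' l'' \<theta> * r3 l l' l'' \<theta>s * cos (lam3 l l' l'' \<theta>s - lam3 l l' l'' \<theta>)) =
      (\<Sum>(l, m, n)\<in>triples 1 L. Re (cnj (X3 l m n \<theta>) * X3 l m n \<theta>)) - 2 * (\<Sum>(l, m, n)\<in>triples 1 L. Re (cnj (X3 l m n \<theta>) * X3 l m n \<theta>s))
      + (\<Sum>(l, m, n)\<in>triples 1 L. Re (cnj (X3 l m n \<theta>s) * X3 l m n \<theta>s))"
    unfolding sum_comb3
  proof (rule sum.cong[OF refl])
    fix x :: "nat \<times> nat \<times> nat"
    obtain l m n where x: "x = (l, m, n)" by (cases x) auto
    show "(case x of (l, l', l'') \<Rightarrow> r3 l l' l'' \<theta> ^ 2 + r3 l l' l'' \<theta>s ^ 2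
            - 2 * r3 l l' l'' \<theta> * r3 l l' l'' \<theta>s * cos (lam3 l l' l'' \<theta>s - lam3 l l' l'' \<theta>)) =
      (case x of (l, m, n) \<Rightarrow> Re (cnj (X3 l m n \<theta>) * X3 l m n \<theta>)) - 2 * (case x of (l, m, n) \<Rightarrow> Re (cnj (X3 l m n \<theta>) * X3 l m n \<theta>s))
      + (case x of (l, m, n) \<Rightarrow> Re (cnj (X3 l m n \<theta>s) * X3 l m n \<theta>s))"
      unfolding x prod.case tri_pt ..
  qed
  have f3: "fact 3 = (6::real)" by (simp add: eval_nat_numeral)
  show ?thesis unfolding sk_Q Q3 e1 e2 f3 by (rule arith3)
qed

lemma u0: "ucoef 0 \<theta> = complex_of_real (\<theta> 0)" by (simp add: ucoef_def)

lemma uu: "ucoef l \<theta> * cnj (ucoef l \<theta>) = complex_of_real (rmag l \<theta> ^ 2)"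
  by (simp only: rmag_def complex_norm_square)

lemma cmod_of_real_sq: "cmod (complex_of_real x) ^ 2 = x ^ 2" by simp

lemma arith4:
  fixes x A T :: real
  shows "1/48 * x + 1/16 * (x + A + A + T) = 1/12 * x + 1/8 * A + 1/16 * T"
  by (simp add: field_simps)

lemma P4: "1/48 * cmod ((ucoef 0 \<theta>)^3 - (ucoef 0 \<theta>s)^3) ^ 2
        + 1/16 * (\<Sum>(l, l', l'')\<in>triples 0 L.
            cmod (ucoef l \<theta> * cnj (ucoef l' \<theta> * ucoef l'' \<theta>)
                  - ucoef l \<theta>s * cnj (ucoef l' \<theta>s * ucoef l'' \<theta>s)) ^ 2)
      = 1/12 * ((\<theta> 0)^3 - (\<theta>s 0)^3)^2
        + 1/8 * (\<Sum>l=1..L. (\<theta> 0 * rmag l \<theta> ^ 2 - \<theta>s 0 * rmag l \<theta>s ^ 2)^2)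
        + 1/16 * (\<Sum>(l, l', l'')\<in>triples 1 L.
            r3 l l' l'' \<theta> ^ 2 + r3 l l' l'' \<theta>s ^ 2
            - 2 * r3 l l' l'' \<theta> * r3 l l' l'' \<theta>s * cos (lam3 l l' l'' \<theta>s - lam3 l l' l'' \<theta>))"
proof -
  have c0: "(ucoef 0 \<theta>)^3 - (ucoef 0 \<theta>s)^3 = complex_of_real ((\<theta> 0)^3 - (\<theta>s 0)^3)"
    by (simp add: u0)
  have c00: "ucoef 0 \<theta> * cnj (ucoef 0 \<theta> * ucoef 0 \<theta>) - ucoef 0 \<theta>s * cnj (ucoef 0 \<theta>s * ucoef 0 \<theta>s)
     = complex_of_real ((\<theta> 0)^3 - (\<theta>s 0)^3)"
    by (simp add: u0 power3_eq_cube)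
  have cA: "ucoef l \<theta> * cnj (ucoef l \<theta> * ucoef 0 \<theta>) - ucoef l \<theta>s * cnj (ucoef l \<theta>s * ucoef 0 \<theta>s)
     = complex_of_real (\<theta> 0 * rmag l \<theta> ^ 2 - \<theta>s 0 * rmag l \<theta>s ^ 2)" for l
  proof -
    have "ucoef l \<theta> * cnj (ucoef l \<theta> * ucoef 0 \<theta>) - ucoef l \<theta>s * cnj (ucoef l \<theta>s * ucoef 0 \<theta>s)
      = complex_of_real (\<theta> 0) * (ucoef l \<theta> * cnj (ucoef l \<theta>)) - complex_of_real (\<theta>s 0) * (ucoef l \<theta>s * cnj (ucoef l \<theta>s))"
      by (simp add: u0 ac_simps)
    also have "\<dots> = complex_of_real (\<theta> 0 * rmag l \<theta> ^ 2 - \<theta>s 0 * rmag l \<theta>s ^ 2)"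
      by (simp only: uu) simp
    finally show ?thesis .
  qed
  have cB: "ucoef l \<theta> * cnj (ucoef 0 \<theta> * ucoef l \<theta>) - ucoef l \<theta>s * cnj (ucoef 0 \<theta>s * ucoef l \<theta>s)
     = complex_of_real (\<theta> 0 * rmag l \<theta> ^ 2 - \<theta>s 0 * rmag l \<theta>s ^ 2)" for l
  proof -
    have "ucoef l \<theta> * cnj (ucoef 0 \<theta> * ucoef l \<theta>) - ucoef l \<theta>s * cnj (ucoef 0 \<theta>s * ucoef l \<theta>s)
      = complex_of_real (\<theta> 0) * (ucoef l \<theta> * cnj (ucoef l \<theta>)) - complex_of_real (\<theta>s 0) * (ucoef l \<theta>s * cnj (ucoef l \<theta>s))"
      by (simp add: u0 ac_simps)
    also have "\<dots> = complex_of_real (\<theta> 0 * rmag l \<theta> ^ 2 - \<theta>s 0 * rmag l \<theta>s ^ 2)"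
      by (simp only: uu) simp
    finally show ?thesis .
  qed
  have cT: "(\<Sum>(l, l', l'')\<in>triples 1 L.
            cmod (ucoef l \<theta> * cnj (ucoef l' \<theta> * ucoef l'' \<theta>)
                  - ucoef l \<theta>s * cnj (ucoef l' \<theta>s * ucoef l'' \<theta>s)) ^ 2)
     = (\<Sum>(l, l', l'')\<in>triples 1 L.
            r3 l l' l'' \<theta> ^ 2 + r3 l l' l'' \<theta>s ^ 2
            - 2 * r3 l l' l'' \<theta> * r3 l l' l'' \<theta>s * cos (lam3 l l' l'' \<theta>s - lam3 l l' l'' \<theta>))"
  proof (rule sum.cong[OF refl])
    fix x :: "nat \<times> nat \<times> nat"
    obtain l m n where x: "x = (l, m, n)" by (cases x) auto
    show "(case x of (l, l', l'') \<Rightarrow> cmod (ucoef l \<theta> * cnj (ucoef l' \<theta> * ucoef l'' \<theta>)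
                  - ucoef l \<theta>s * cnj (ucoef l' \<theta>s * ucoef l'' \<theta>s)) ^ 2) =
      (case x of (l, l', l'') \<Rightarrow> r3 l l' l'' \<theta> ^ 2 + r3 l l' l'' \<theta>s ^ 2
            - 2 * r3 l l' l'' \<theta> * r3 l l' l'' \<theta>s * cos (lam3 l l' l'' \<theta>s - lam3 l l' l'' \<theta>))"
      unfolding x prod.case X3_def[symmetric] cmod_diff_sq tri_pt ..
  qed
  show ?thesis
    unfolding triples_split[where g = "\<lambda>(l, l', l''). cmod (ucoef l \<theta> * cnj (ucoef l' \<theta> * ucoef l'' \<theta>)
                  - ucoef l \<theta>s * cnj (ucoef l' \<theta>s * ucoef l'' \<theta>s)) ^ 2"] prod.case c0 c00
    unfolding cA cB cT cmod_of_real_sq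
    by (rule arith4)
qed


theorem theorem3p3:
  fixes L :: nat and \<theta> \<theta>s :: "nat \<Rightarrow> real"
  assumes "L \<ge> 1"
  shows "sk L \<theta>s 1 \<theta> = 1/2 * (\<theta> 0 - \<theta>s 0)^2
    \<and> sk L \<theta>s 2 \<theta> = 1/4 * ((\<theta> 0)^2 - (\<theta>s 0)^2)^2
        + 1/8 * (\<Sum>l=1..L. (rmag l \<theta> ^ 2 - rmag l \<theta>s ^ 2)^2)
    \<and> sk L \<theta>s 3 \<theta> = 1/48 * cmod ((ucoef 0 \<theta>)^3 - (ucoef 0 \<theta>s)^3) ^ 2
        + 1/16 * (\<Sum>(l, l', l'')\<in>triples 0 L.
            cmod (ucoef l \<theta> * cnj (ucoef l' \<theta> * ucoef l'' \<theta>)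
                  - ucoef l \<theta>s * cnj (ucoef l' \<theta>s * ucoef l'' \<theta>s)) ^ 2)
    \<and> 1/48 * cmod ((ucoef 0 \<theta>)^3 - (ucoef 0 \<theta>s)^3) ^ 2
        + 1/16 * (\<Sum>(l, l', l'')\<in>triples 0 L.
            cmod (ucoef l \<theta> * cnj (ucoef l' \<theta> * ucoef l'' \<theta>)
                  - ucoef l \<theta>s * cnj (ucoef l' \<theta>s * ucoef l'' \<theta>s)) ^ 2)
      = 1/12 * ((\<theta> 0)^3 - (\<theta>s 0)^3)^2
        + 1/8 * (\<Sum>l=1..L. (\<theta> 0 * rmag l \<theta> ^ 2 - \<theta>s 0 * rmag l \<theta>s ^ 2)^2)
        + 1/16 * (\<Sum>(l, l', l'')\<in>triples 1 L.
            r3 l l' l'' \<theta> ^ 2 + r3 l l' l'' \<theta>s ^ 2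
            - 2 * r3 l l' l'' \<theta> * r3 l l' l'' \<theta>s * cos (lam3 l l' l'' \<theta>s - lam3 l l' l'' \<theta>))"
  proof (intro conjI)
  show "sk L \<theta>s 1 \<theta> = 1/2 * (\<theta> 0 - \<theta>s 0)^2" by (rule P1)
  show "sk L \<theta>s 2 \<theta> = 1/4 * ((\<theta> 0)^2 - (\<theta>s 0)^2)^2
        + 1/8 * (\<Sum>l=1..L. (rmag l \<theta> ^ 2 - rmag l \<theta>s ^ 2)^2)" by (rule P2)
  show "sk L \<theta>s 3 \<theta> = 1/48 * cmod ((ucoef 0 \<theta>)^3 - (ucoef 0 \<theta>s)^3) ^ 2
        + 1/16 * (\<Sum>(l, l', l'')\<in>triples 0 L.
            cmod (ucoef l \<theta> * cnj (ucoef l' \<theta> * ucoef l'' \<theta>)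
                  - ucoef l \<theta>s * cnj (ucoef l' \<theta>s * ucoef l'' \<theta>s)) ^ 2)"
    using P3 P4 by (rule trans[OF _ sym])
qed (rule P4)

end
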